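(* The energy $W^-_{\mathrm{magic}}\colon\mathrm{GL}^+(2)\to\mathbb{R}$, \[ W^-_{\mathrm{magic}}(F)=\frac{\lambda_{\max}}{\lambda_{\min}}+\log\!\left(\frac{\lambda_{\max}}{\lambda_{\min}}\right)-\log(\lambda_{\max}\lambda_{\min})=\frac{\lambda_{\max}}{\lambda_{\min}}-2\log\lambda_{\min}, \] where $\lambda_{\max}\ge\lambda_{\min}>0$ are the ordered singular values of $F$, is polyconvex.
   Context: $\mathrm{GL}^+(2)=\{F\in\mathbb{R}^{2\times2}:\det F>0\}$. A function $W\colon\mathrm{GL}^+(2)\to\mathbb{R}$ is polyconvex if its extension $\widehat W\colon\mathbb{R}^{2\times2}\to\mathbb{R}\cup\{+\infty\}$ ($\widehat W=W$ on $\mathrm{GL}^+(2)$, $+\infty$ elsewhere) can be written as $\widehat W(F)=P(F,\det F)$ for all $F\in\mathbb{R}^{2\times2}$ with some convex function $P\colon\mathbb{R}^{2\times2}\times\mathbb{R}\to\mathbb{R}\cup\{+\infty\}$. *)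

theory Defs
  imports "HOL-Analysis.Analysis"
begin

definition singular_values :: "real^2^2 \<Rightarrow> real set" where
  "singular_values F = {s. s \<ge> 0 \<and> (\<exists>v::real^2. v \<noteq> 0 \<and> (transpose F ** F) *v v = (s^2) *\<^sub>R v)}"

definition lambda_max :: "real^2^2 \<Rightarrow> real" where
  "lambda_max F = Max (singular_values F)"

definition lambda_min :: "real^2^2 \<Rightarrow> real" where
  "lambda_min F = Min (singular_values F)"

text \<open>Polyconvexity on GL+(2): the extension by +infinity outside GL+(2) is of the form
  P(F, det F) with P convex with values in R \<union> {+\<infinity>} (convexity expressed via the
  convexity of the epigraph).\<close>
definition ext_convex :: "('a::real_vector \<Rightarrow> ereal) \<Rightarrow> bool" where
  "ext_convex P \<longleftrightarrow> (\<forall>z. P z \<noteq> -\<infinity>) \<and> convex {(z, r::real). P z \<le> ereal r}"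

definition polyconvex :: "(real^2^2 \<Rightarrow> real) \<Rightarrow> bool" where
  "polyconvex W \<longleftrightarrow> (\<exists>P :: ((real^2^2) \<times> real) \<Rightarrow> ereal. ext_convex P \<and>
     (\<forall>F. P (F, det F) = (if det F > 0 then ereal (W F) else \<infinity>)))"

definition W_magic_minus :: "real^2^2 \<Rightarrow> real" where
  "W_magic_minus F = lambda_max F / lambda_min F + ln (lambda_max F / lambda_min F)
                     - ln (lambda_max F * lambda_min F)"

end

theory Submission
  imports Defs
begin

lemma eig2:
  fixes M :: "real^2^2"
  shows "(\<exists>v::real^2. v \<noteq> 0 \<and> M *v v = \<mu> *\<^sub>R v) \<longleftrightarrow>
         (M$1$1 - \<mu>) * (M$2$2 - \<mu>) - M$1$2 * M$2$1 = 0"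
proof
  assume "\<exists>v::real^2. v \<noteq> 0 \<and> M *v v = \<mu> *\<^sub>R v"
  then obtain v :: "real^2" where v: "v \<noteq> 0" "M *v v = \<mu> *\<^sub>R v" by blast
  have e1: "M$1$1 * v$1 + M$1$2 * v$2 = \<mu> * v$1"
    using arg_cong[OF v(2), of "\<lambda>w. w$1"] by (simp add: matrix_vector_mult_def sum_2)
  have e2: "M$2$1 * v$1 + M$2$2 * v$2 = \<mu> * v$2"
    using arg_cong[OF v(2), of "\<lambda>w. w$2"] by (simp add: matrix_vector_mult_def sum_2)
  have nz: "v$1 \<noteq> 0 \<or> v$2 \<noteq> 0" using v(1) by (auto simp: vec_eq_iff forall_2)
  have a: "((M$1$1 - \<mu>) * (M$2$2 - \<mu>) - M$1$2 * M$2$1) * v$1 = 0"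
    using e1 e2 by algebra
  have b: "((M$1$1 - \<mu>) * (M$2$2 - \<mu>) - M$1$2 * M$2$1) * v$2 = 0"
    using e1 e2 by algebra
  show "(M$1$1 - \<mu>) * (M$2$2 - \<mu>) - M$1$2 * M$2$1 = 0"
    using nz a b by auto
next
  assume c: "(M$1$1 - \<mu>) * (M$2$2 - \<mu>) - M$1$2 * M$2$1 = 0"
  define v1 :: "real^2" where "v1 = vector [M$1$2, \<mu> - M$1$1]"
  define v2 :: "real^2" where "v2 = vector [\<mu> - M$2$2, M$2$1]"
  have m1: "M *v v1 = \<mu> *\<^sub>R v1"
    unfolding v1_def using c
    by (simp add: vec_eq_iff forall_2 matrix_vector_mult_def sum_2) algebra
  have m2: "M *v v2 = \<mu> *\<^sub>R v2"
    unfolding v2_def using c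
    by (simp add: vec_eq_iff forall_2 matrix_vector_mult_def sum_2) algebra
  show "\<exists>v::real^2. v \<noteq> 0 \<and> M *v v = \<mu> *\<^sub>R v"
  proof (cases "v1 = 0 \<and> v2 = 0")
    case True
    then have "M$1$2 = 0" "M$2$1 = 0" "M$1$1 = \<mu>" "M$2$2 = \<mu>"
      by (auto simp: v1_def v2_def vec_eq_iff forall_2)
    then have "M *v vector [1, 0] = \<mu> *\<^sub>R (vector [1, 0] :: real^2)"
      by (simp add: vec_eq_iff forall_2 matrix_vector_mult_def sum_2)
    moreover have "(vector [1, 0] :: real^2) \<noteq> 0" by (simp add: vec_eq_iff forall_2)
    ultimately show ?thesis by blast
  next
    case False
    then show ?thesis using m1 m2 by blast
  qed
qed

definition dd :: "real^2^2 \<Rightarrow> real" where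
  "dd F = sqrt ((F$1$1 - F$2$2)^2 + (F$1$2 + F$2$1)^2)"
definition SS :: "real^2^2 \<Rightarrow> real" where
  "SS F = sqrt ((F$1$1 + F$2$2)^2 + (F$1$2 - F$2$1)^2)"

lemma sv_eq:
  fixes F :: "real^2^2"
  assumes "det F > 0"
  shows "singular_values F = {(SS F + dd F)/2, (SS F - dd F)/2}"
    "0 < (SS F - dd F)/2" "0 \<le> dd F"
    "(SS F + dd F)/2 * ((SS F - dd F)/2) = det F"
proof -
  define p where "p = F$1$1"
  define q where "q = F$1$2"
  define r where "r = F$2$1"
  define u where "u = F$2$2"
  have dt: "det F = p*u - q*r" by (simp add: det_2 p_def q_def r_def u_def)
  define X where "X = (p+u)^2 + (q-r)^2"
  define Y where "Y = (p-u)^2 + (q+r)^2"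
  have SSX: "SS F = sqrt X" by (simp add: SS_def X_def p_def q_def r_def u_def)
  have ddY: "dd F = sqrt Y" by (simp add: dd_def Y_def p_def q_def r_def u_def)
  have X0: "X \<ge> 0" "Y \<ge> 0" unfolding X_def Y_def by simp_all
  have XY: "X - Y = 4 * det F" by (simp add: dt X_def Y_def algebra_simps power2_eq_square)
  have lt: "sqrt Y < sqrt X" using XY assms X0 by simp
  show "0 \<le> dd F" using X0 by (simp add: ddY)
  show "0 < (SS F - dd F)/2" using lt SSX ddY by simp
  define a where "a = (SS F + dd F)/2"
  define b where "b = (SS F - dd F)/2"
  have a0: "a \<ge> 0" "b \<ge> 0" using lt X0 by (auto simp: a_def b_def SSX ddY)
  have sq: "SS F ^2 = X" "dd F ^2 = Y" using X0 by (auto simp: SSX ddY)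
  have ab1: "a^2 + b^2 = p^2+q^2+r^2+u^2"
  proof -
    have "a^2 + b^2 = (SS F^2 + dd F^2)/2" unfolding a_def b_def by (simp add: power2_eq_square field_simps)
    then show ?thesis unfolding sq X_def Y_def by (simp add: power2_eq_square algebra_simps)
  qed
  have ab2: "a * b = p*u - q*r"
  proof -
    have "a * b = (SS F^2 - dd F^2)/4" unfolding a_def b_def by (simp add: power2_eq_square field_simps)
    then show ?thesis unfolding sq X_def Y_def by (simp add: power2_eq_square algebra_simps)
  qed
  have M: "(transpose F ** F)$1$1 = p^2 + r^2" "(transpose F ** F)$2$2 = q^2 + u^2"
     "(transpose F ** F)$1$2 = p*q + r*u" "(transpose F ** F)$2$1 = p*q + r*u"
    by (simp_all add: matrix_matrix_mult_def transpose_def sum_2 p_def q_def r_def u_def power2_eq_square mult.commute)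
  have char: "\<And>t::real. ((transpose F ** F)$1$1 - t^2) * ((transpose F ** F)$2$2 - t^2)
      - (transpose F ** F)$1$2 * (transpose F ** F)$2$1 = (t^2 - a^2) * (t^2 - b^2)"
  proof -
    fix t :: real
    have "(t^2 - a^2) * (t^2 - b^2) = t^4 - (a^2+b^2)*t^2 + (a*b)^2" by algebra
    also have "\<dots> = t^4 - (p^2+q^2+r^2+u^2)*t^2 + (p*u-q*r)^2" by (simp add: ab1 ab2)
    finally show "((transpose F ** F)$1$1 - t^2) * ((transpose F ** F)$2$2 - t^2)
      - (transpose F ** F)$1$2 * (transpose F ** F)$2$1 = (t^2 - a^2) * (t^2 - b^2)"
      unfolding M by algebra
  qed
  have tiff: "t \<in> singular_values F \<longleftrightarrow> t = a \<or> t = b" for t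
  proof -
    have "t \<in> singular_values F \<longleftrightarrow> t \<ge> 0 \<and> (\<exists>v::real^2. v \<noteq> 0 \<and> (transpose F ** F) *v v = (t^2) *\<^sub>R v)"
      by (simp add: singular_values_def)
    also have "\<dots> \<longleftrightarrow> t \<ge> 0 \<and> (t^2 - a^2) * (t^2 - b^2) = 0"
      by (simp only: eig2 char)
    also have "\<dots> \<longleftrightarrow> t = a \<or> t = b"
    proof
      assume h: "t \<ge> 0 \<and> (t^2 - a^2) * (t^2 - b^2) = 0"
      then have "t^2 = a^2 \<or> t^2 = b^2" by simp
      then show "t = a \<or> t = b" using h a0 power2_eq_iff_nonneg by blast
    next
      assume "t = a \<or> t = b"
      then show "t \<ge> 0 \<and> (t^2 - a^2) * (t^2 - b^2) = 0" using a0 by auto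
    qed
    finally show ?thesis .
  qed
  show "(SS F + dd F)/2 * ((SS F - dd F)/2) = det F" using ab2 dt by (simp add: a_def b_def)
  have "singular_values F = {a, b}" using tiff by blast
  then show "singular_values F = {(SS F + dd F)/2, (SS F - dd F)/2}"
    by (simp only: a_def b_def)
qed

definition hb :: "real \<Rightarrow> (real^2^2) \<times> real \<Rightarrow> real" where
  "hb b z = 2 + 2 * dd (fst z) / b - snd z / b^2 - 2 * ln b"

definition PP :: "(real^2^2) \<times> real \<Rightarrow> ereal" where
  "PP z = (SUP b\<in>{0<..}. ereal (hb b z))"

lemma sqrt_scale: "0 \<le> u \<Longrightarrow> sqrt ((u*x)^2 + (u*y)^2) = u * sqrt (x^2 + y^2)"
proof -
  assume "0 \<le> u"
  have "(u*x)^2 + (u*y)^2 = u^2 * (x^2 + y^2)" by (simp add: power_mult_distrib algebra_simps)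
  then show ?thesis using \<open>0 \<le> u\<close> by (simp add: real_sqrt_mult)
qed

lemma dd_convex:
  assumes "0 \<le> u" "0 \<le> v"
  shows "dd (u *\<^sub>R F + v *\<^sub>R G) \<le> u * dd F + v * dd G"
proof -
  have "dd (u *\<^sub>R F + v *\<^sub>R G) = sqrt ((u*(F$1$1 - F$2$2) + v * (G$1$1 - G$2$2))^2
        + (u*(F$1$2 + F$2$1) + v * (G$1$2 + G$2$1))^2)"
    by (simp add: dd_def algebra_simps)
  also have "\<dots> \<le> sqrt ((u*(F$1$1 - F$2$2))^2 + (u*(F$1$2 + F$2$1))^2)
       + sqrt ((v * (G$1$1 - G$2$2))^2 + (v * (G$1$2 + G$2$1))^2)"
    by (rule real_sqrt_sum_squares_triangle_ineq)
  also have "\<dots> = u * dd F + v * dd G"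
    using assms by (simp add: sqrt_scale dd_def)
  finally show ?thesis .
qed

lemma hb_convex:
  assumes "0 < b" "0 \<le> u" "0 \<le> v" "u + v = 1"
  shows "hb b (u *\<^sub>R z + v *\<^sub>R w) \<le> u * hb b z + v * hb b w"
proof -
  obtain F d where z: "z = (F, d)" by (cases z)
  obtain G e where w: "w = (G, e)" by (cases w)
  have "2 * dd (u *\<^sub>R F + v *\<^sub>R G) / b \<le> 2 * (u * dd F + v * dd G) / b"
    using dd_convex[OF assms(2,3), of F G] assms(1) by (intro divide_right_mono) auto
  moreover have "u * hb b z + v * hb b w = 2 + 2 * (u * dd F + v * dd G) / b - (u*d + v * e) / b^2 - 2 * ln b"
  proof -
    have v: "v = 1 - u" using assms(4) by simp
    show ?thesis unfolding z w hb_def v using assms(1) by (simp add: field_simps)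
  qed
  moreover have "hb b (u *\<^sub>R z + v *\<^sub>R w) = 2 + 2 * dd (u *\<^sub>R F + v *\<^sub>R G) / b - (u*d + v * e) / b^2 - 2 * ln b"
    unfolding z w hb_def by simp
  ultimately show ?thesis by linarith
qed

lemma hb_max:
  assumes "0 < b0" "b0 \<le> a" "0 < x" "dd F = a - b0"
  shows "hb x (F, a*b0) \<le> a/b0 - 2 * ln b0"
proof -
  have l: "ln (b0/x) \<le> b0/x - 1" using assms by (intro ln_le_minus_one) simp
  have l2: "ln (b0/x) = ln b0 - ln x" using assms by (simp add: ln_div)
  have a0: "a > 0" using assms by simp
  have k: "a/b0 - 2*a/x + a*b0/x^2 \<ge> 0"
  proof -
    have "a/b0 - 2*a/x + a*b0/x^2 = a * (x - b0)^2 / (b0 * x^2)"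
      using assms by (simp add: field_simps power2_eq_square)
    also have "\<dots> \<ge> 0" using a0 assms by simp
    finally show ?thesis .
  qed
  have e: "hb x (F, a*b0) = 2 + 2*a/x - 2*b0/x - a*b0/x^2 - 2 * ln x"
    unfolding hb_def using assms by (simp add: diff_divide_distrib)
  have "b0/x * 2 = 2*b0/x" by simp
  then show ?thesis unfolding e using k l l2 by linarith
qed

lemma hb_at:
  assumes "0 < b0" "dd F = a - b0"
  shows "hb b0 (F, a*b0) = a/b0 - 2 * ln b0"
  unfolding hb_def fst_conv snd_conv assms(2) using assms(1) by (simp add: field_simps power2_eq_square)

lemma PP_pos:
  assumes "det F > 0"
  shows "PP (F, det F) = ereal (W_magic_minus F)"
proof -
  define a where "a = (SS F + dd F)/2"
  define b where "b = (SS F - dd F)/2"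
  have sv: "singular_values F = {a, b}" and b0: "0 < b" and d0: "0 \<le> dd F"
    and ab: "a * b = det F"
    using sv_eq[OF assms] by (simp_all add: a_def b_def)
  have ba: "b \<le> a" using d0 by (simp add: a_def b_def)
  have dab: "dd F = a - b" by (simp add: a_def b_def field_simps)
  have lm: "lambda_max F = a" "lambda_min F = b"
    using ba by (simp_all add: lambda_max_def lambda_min_def sv max_def min_def)
  have a0: "0 < a" using b0 ba by simp
  have W: "W_magic_minus F = a/b - 2 * ln b"
    unfolding W_magic_minus_def lm using a0 b0 by (simp add: ln_div ln_mult)
  have "PP (F, a*b) = ereal (a/b - 2 * ln b)"
    unfolding PP_def
  proof (rule antisym)
    show "(SUP x\<in>{0<..}. ereal (hb x (F, a * b))) \<le> ereal (a / b - 2 * ln b)"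
      using hb_max[OF b0 ba _ dab] by (intro SUP_least) simp
    have "ereal (hb b (F, a * b)) \<le> (SUP x\<in>{0<..}. ereal (hb x (F, a * b)))"
      using b0 by (intro SUP_upper) simp
    then show "ereal (a / b - 2 * ln b) \<le> (SUP x\<in>{0<..}. ereal (hb x (F, a * b)))"
      using hb_at[OF b0 dab] by simp
  qed
  then show ?thesis using ab W by simp
qed

lemma PP_nonpos:
  assumes "d \<le> 0"
  shows "PP (F, d) = \<infinity>"
proof -
  have "\<exists>i\<in>{0<..}. x < ereal (hb i (F, d))" if "x < \<infinity>" for x :: ereal
  proof -
    define M where "M = (if x = - \<infinity> then 0 else real_of_ereal x)"
    have M: "x \<le> ereal M" using that unfolding M_def by (cases x) auto
    define i where "i = exp (- \<bar>M\<bar> / 2)"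
    have i0: "0 < i" by (simp add: i_def)
    have li: "ln i = - \<bar>M\<bar> / 2" by (simp add: i_def)
    have "0 \<le> 2 * dd F / i" using i0 by (simp add: dd_def)
    moreover have "0 \<le> - d / i^2" using assms i0 by (simp add: divide_nonpos_pos)
    ultimately have "hb i (F, d) \<ge> 2 + \<bar>M\<bar>" unfolding hb_def li by simp
    then have "M < hb i (F, d)" by linarith
    then show ?thesis using M i0 by (intro bexI[of _ i]) (auto intro: le_less_trans)
  qed
  then have "(SUP b\<in>{0<..}. ereal (hb b (F, d))) = (top::ereal)"
    unfolding SUP_eq_top_iff by (simp add: top_ereal_def)
  then show ?thesis by (simp add: PP_def top_ereal_def)
qed

lemma PP_convex: "ext_convex PP"
  unfolding ext_convex_def
proof (intro conjI allI)
  fix z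
  have "ereal (hb 1 z) \<le> PP z" unfolding PP_def by (intro SUP_upper) simp
  then show "PP z \<noteq> - \<infinity>" by auto
next
  have mem: "(z, r) \<in> {(z, r). PP z \<le> ereal r} \<longleftrightarrow> (\<forall>b>0. hb b z \<le> r)" for z r
    by (auto simp add: PP_def SUP_le_iff)
  show "convex {(z, r). PP z \<le> ereal r}"
  proof (rule convexI)
    fix x y :: "((real^2^2) \<times> real) \<times> real" and u v :: real
    assume x: "x \<in> {(z, r). PP z \<le> ereal r}" and y: "y \<in> {(z, r). PP z \<le> ereal r}"
      and u: "0 \<le> u" "0 \<le> v" "u + v = 1"
    obtain z1 r1 where x1: "x = (z1, r1)" by (cases x)
    obtain z2 r2 where y1: "y = (z2, r2)" by (cases y)
    have h1: "\<forall>b>0. hb b z1 \<le> r1" using x mem x1 by blast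
    have h2: "\<forall>b>0. hb b z2 \<le> r2" using y mem y1 by blast
    have "\<forall>b>0. hb b (u *\<^sub>R z1 + v *\<^sub>R z2) \<le> u * r1 + v * r2"
    proof (intro allI impI)
      fix b :: real assume b: "0 < b"
      have "hb b (u *\<^sub>R z1 + v *\<^sub>R z2) \<le> u * hb b z1 + v * hb b z2"
        using hb_convex[OF b u] .
      also have "\<dots> \<le> u * r1 + v * r2"
        using h1 h2 b u by (intro add_mono mult_left_mono) auto
      finally show "hb b (u *\<^sub>R z1 + v *\<^sub>R z2) \<le> u * r1 + v * r2" .
    qed
    then show "u *\<^sub>R x + v *\<^sub>R y \<in> {(z, r). PP z \<le> ereal r}"
      using mem unfolding x1 y1 by simp
  qed
qed

theorem lemma5p1:
  shows "polyconvex W_magic_minus"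
  unfolding polyconvex_def
proof (intro exI conjI allI)
  show "ext_convex PP" by (rule PP_convex)
  fix F :: "real^2^2"
  show "PP (F, det F) = (if det F > 0 then ereal (W_magic_minus F) else \<infinity>)"
    using PP_pos[of F] PP_nonpos[of "det F" F] by simp
qed

end
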